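(* Let $m\ge n$, $B\in\mathbb R^{n\times m}$ of full row rank, $f,h$ convex and continuously differentiable with Lipschitz gradients, $\mathcal L(u,p)=f(u)-h(p)+(Bu,p)$ with saddle point $(u^*,p^* )$, and $\mathcal I_{\mathcal V},\mathcal I_{\mathcal Q}$ symmetric positive definite. Suppose $f\in\mathcal S^{1,1}_{\mu_{f,\mathcal I_{\mathcal V}},L_{f,\mathcal I_{\mathcal V}}}$ w.r.t. $\mathcal I_{\mathcal V}$ with $0<\mu_{f,\mathcal I_{\mathcal V}}\le L_{f,\mathcal I_{\mathcal V}}<2$. Let $(u_k,p_k)$ be generated from $(u_0,p_0)$ by the inexact IMEX iteration $$u_{k+1/2}=u_k-\mathcal I_{\mathcal V}^{-1}(\nabla f(u_k)+B^\top p_k),\qquad p_{k+1}=p_k-\alpha_k\mathcal I_{\mathcal Q}^{-1}(\nabla h(p_k)-Bu_{k+1/2}),$$ where $u_{k+1}$ is any point satisfying $\|\nabla\tilde f(u_{k+1};u_k,p_{k+1})\|^2_{\mathcal I_{\mathcal V}^{-1}}\le\epsilon_k$ for $k=0,1,2,\dots$, with $\tilde f(u;u_k,p_{k+1})=f(u)+\frac1{2\alpha_k}\|u-u_k+\alpha_k\mathcal I_{\mathcal V}^{-1}B^\top p_{k+1}\|^2_{\mathcal I_{\mathcal V}}$ (gradient in $u$). Then for $0<\alpha_k<\mu_{\mathcal Q}/L_{S,\mathcal Q}^2$ and $\mu_k=\min\{\mu_{\mathcal V}/2,\ \mu_{\mathcal Q}-\alpha_kL_{S,\mathcal Q}^2\}$,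 $$\mathcal E(u_{k+1},p_{k+1})\le\frac1{1+\alpha_k\mu_k}\mathcal E(u_k,p_k)+\frac{2\alpha_k}{(1+\alpha_k\mu_k)\mu_{\mathcal V}}\epsilon_k.$$ In particular, for $\alpha_k=\mu_{\mathcal Q}/(2L_{S,\mathcal Q}^2)$ for all $k$, $$\mathcal E(u_{n+1},p_{n+1})\le\rho^{n+1}\mathcal E(u_0,p_0)+\frac{\mu_{\mathcal Q}}{\mu_{\mathcal V}L_{S,\mathcal Q}^2}\sum_{k=0}^n\rho^{n-k+1}\epsilon_k,$$ where $\mu=\min\{\mu_{\mathcal V},\mu_{\mathcal Q}\}$ and $\rho=1/(1+\mu_{\mathcal Q}\mu/(4L_{S,\mathcal Q}^2))\in(0,1)$.
   Context: For SPD $M$, $\|x\|_M=(Mx,x)^{1/2}$; $D_g(y,x)=g(y)-g(x)-(\nabla g(x),y-x)$; $g\in\mathcal S^{1,1}_{\mu_{g,M},L_{g,M}}$ w.r.t. $M$ means $\frac{\mu_{g,M}}2\|x-y\|_M^2\le D_g(y,x)\le\frac{L_{g,M}}2\|x-y\|_M^2$ for all $x,y$. A saddle point satisfies $\nabla f(u^* )+B^\top p^*=0$, $Bu^*=\nabla h(p^* )$. Define $e(u)=u-\mathcal I_{\mathcal V}^{-1}\nabla f(u)$, $h_B(p)=h(p)+\frac12(B\mathcal I_{\mathcal V}^{-1}B^\top p,p)$, $\mathcal E(u,p)=\frac12\|u-u^*\|^2_{\mathcal I_{\mathcal V}}+\frac12\|p-p^*\|^2_{\mathcal I_{\mathcal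 Q}}$. Let $L_{e,\mathcal I_{\mathcal V}}$ be the Lipschitz constant of $e$ in $\|\cdot\|_{\mathcal I_{\mathcal V}}$, $\mu_{h_B,\mathcal I_{\mathcal Q}},L_{h_B,\mathcal I_{\mathcal Q}}$ the convexity and smoothness constants of $h_B$ w.r.t. $\mathcal I_{\mathcal Q}$, $L_S^2=\lambda_{\max}(\mathcal I_{\mathcal Q}^{-1}B\mathcal I_{\mathcal V}^{-1}B^\top)$. Constants: $\mu_{\mathcal V}=\mu_{f,\mathcal I_{\mathcal V}}$, $\mu_{\mathcal Q}=(2-L_{f,\mathcal I_{\mathcal V}})\mu_{h_B,\mathcal I_{\mathcal Q}}$, $L_{S,\mathcal Q}^2=L_{h_B,\mathcal I_{\mathcal Q}}^2+L_{e,\mathcal I_{\mathcal V}}^2L_S^2$. *)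

theory Defs
  imports "HOL-Analysis.Analysis"
begin

definition normsq :: "real^'a^'a \<Rightarrow> real^'a \<Rightarrow> real" where
  "normsq M x = (M *v x) \<bullet> x"

definition SPD :: "real^'a^'a \<Rightarrow> bool" where
  "SPD M \<longleftrightarrow> transpose M = M \<and> (\<forall>x. x \<noteq> 0 \<longrightarrow> 0 < (M *v x) \<bullet> x)"

definition bregman :: "(real^'a \<Rightarrow> real) \<Rightarrow> (real^'a \<Rightarrow> real^'a) \<Rightarrow> real^'a \<Rightarrow> real^'a \<Rightarrow> real" where
  "bregman g G y x = g y - g x - G x \<bullet> (y - x)"

definition in_S11 :: "(real^'a \<Rightarrow> real) \<Rightarrow> (real^'a \<Rightarrow> real^'a) \<Rightarrow> real^'a^'a \<Rightarrow> real \<Rightarrow> real \<Rightarrow> bool" where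
  "in_S11 g G M \<mu> L \<longleftrightarrow> (\<forall>x y. \<mu>/2 * normsq M (x - y) \<le> bregman g G y x
                                \<and> bregman g G y x \<le> L/2 * normsq M (x - y))"

definition cvx_const :: "(real^'a \<Rightarrow> real) \<Rightarrow> (real^'a \<Rightarrow> real^'a) \<Rightarrow> real^'a^'a \<Rightarrow> real" where
  "cvx_const g G M = Sup {\<mu>. \<forall>x y. \<mu>/2 * normsq M (x - y) \<le> bregman g G y x}"

definition smooth_const :: "(real^'a \<Rightarrow> real) \<Rightarrow> (real^'a \<Rightarrow> real^'a) \<Rightarrow> real^'a^'a \<Rightarrow> real" where
  "smooth_const g G M = Inf {L. \<forall>x y. bregman g G y x \<le> L/2 * normsq M (x - y)}"

definition lip_const :: "(real^'a \<Rightarrow> real^'a) \<Rightarrow> real^'a^'a \<Rightarrow> real" where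
  "lip_const F M = Inf {L. 0 \<le> L \<and> (\<forall>x y. sqrt (normsq M (F x - F y)) \<le> L * sqrt (normsq M (x - y)))}"

definition lambda_max :: "real^'a^'a \<Rightarrow> real" where
  "lambda_max A = Max {c. \<exists>v. v \<noteq> 0 \<and> A *v v = c *\<^sub>R v}"

definition hB :: "(real^'n \<Rightarrow> real) \<Rightarrow> real^'m^'n \<Rightarrow> real^'m^'m \<Rightarrow> real^'n \<Rightarrow> real" where
  "hB h B IV q = h q + 1/2 * (((B ** matrix_inv IV ** transpose B) *v q) \<bullet> q)"

definition ghB :: "(real^'n \<Rightarrow> real^'n) \<Rightarrow> real^'m^'n \<Rightarrow> real^'m^'m \<Rightarrow> real^'n \<Rightarrow> real^'n" where
  "ghB gh B IV q = gh q + (B ** matrix_inv IV ** transpose B) *v q"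

definition eop :: "(real^'m \<Rightarrow> real^'m) \<Rightarrow> real^'m^'m \<Rightarrow> real^'m \<Rightarrow> real^'m" where
  "eop gf IV v = v - matrix_inv IV *v gf v"

end

theory Submission
  imports Defs
begin



lemma spd_sym: assumes "SPD M" shows "(M *v x) \<bullet> y = x \<bullet> (M *v y)"
proof -
  have "x \<bullet> (M *v y) = (x v* M) \<bullet> y" by (simp add: dot_lmul_matrix)
  also have "\<dots> = (transpose M *v x) \<bullet> y" by simp
  also have "\<dots> = (M *v x) \<bullet> y" using assms by (simp add: SPD_def)
  finally show ?thesis by simp
qed

lemma spd_inv: fixes M :: "real^'a^'a" assumes "SPD M"
  shows "M ** matrix_inv M = mat 1" "matrix_inv M ** M = mat 1"
proof -
  have "inj ((*v) M)"
  proof (rule injI)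
    fix x y assume "M *v x = M *v y"
    then have "M *v (x - y) = 0" by (simp add: matrix_vector_mult_diff_distrib)
    then have "(M *v (x-y)) \<bullet> (x-y) = 0" by simp
    then show "x = y" using assms unfolding SPD_def by (metis less_irrefl right_minus_eq)
  qed
  then obtain B where "B ** M = mat 1" using matrix_left_invertible_injective by blast
  then have "invertible M" using invertible_left_inverse by blast
  then have "\<exists>A'. M ** A' = mat 1 \<and> A' ** M = mat 1" by (simp add: invertible_def)
  then have "M ** matrix_inv M = mat 1 \<and> matrix_inv M ** M = mat 1"
    unfolding matrix_inv_def by (rule someI_ex)
  then show "M ** matrix_inv M = mat 1" "matrix_inv M ** M = mat 1" by auto
qed

lemma spd_inv_apply: fixes M :: "real^'a^'a" assumes "SPD M"
  shows "M *v (matrix_inv M *v x) = x" "matrix_inv M *v (M *v x) = x"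
  using spd_inv[OF assms] by (simp_all add: matrix_vector_mul_assoc)

lemma spd_inv_spd: fixes M :: "real^'a^'a" assumes "SPD M" shows "SPD (matrix_inv M)"
proof -
  let ?I = "matrix_inv M"
  have "transpose ?I ** M = mat 1"
    using spd_inv(1)[OF assms] assms by (metis SPD_def matrix_transpose_mul transpose_mat)
  then have "transpose ?I = ?I"
    by (metis matrix_mul_assoc matrix_mul_lid matrix_mul_rid spd_inv(1)[OF assms])
  moreover have "0 < (?I *v x) \<bullet> x" if "x \<noteq> 0" for x
  proof -
    have "?I *v x \<noteq> 0" using that spd_inv_apply(1)[OF assms, of x] by auto
    then have "0 < (M *v (?I *v x)) \<bullet> (?I *v x)" using assms by (simp add: SPD_def)
    then show ?thesis using spd_inv_apply(1)[OF assms, of x] by (simp add: inner_commute)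
  qed
  ultimately show ?thesis by (simp add: SPD_def)
qed

lemma normsq_nonneg: "SPD M \<Longrightarrow> 0 \<le> normsq M x"
  unfolding SPD_def normsq_def by (cases "x = 0") (auto intro: less_imp_le)




lemma line_deriv:
  fixes g :: "real^'n \<Rightarrow> real"
  assumes "\<And>z. (g has_derivative (\<lambda>h. G z \<bullet> h)) (at z)"
  shows "((\<lambda>t. g (x + t *\<^sub>R d)) has_real_derivative (G (x + t *\<^sub>R d) \<bullet> d)) (at t within S)"
proof -
  have l: "((\<lambda>t. x + t *\<^sub>R d) has_derivative (\<lambda>s. s *\<^sub>R d)) (at t within S)"
    by (auto intro!: derivative_eq_intros)
  have "((\<lambda>t. g (x + t *\<^sub>R d)) has_derivative (\<lambda>s. G (x + t *\<^sub>R d) \<bullet> (s *\<^sub>R d))) (at t within S)"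
    by (rule has_derivative_compose[OF l assms])
  moreover have "(\<lambda>s. G (x + t *\<^sub>R d) \<bullet> (s *\<^sub>R d)) = (*) (G (x + t *\<^sub>R d) \<bullet> d)"
    by (auto simp: fun_eq_iff)
  ultimately show ?thesis by (simp add: has_field_derivative_def)
qed

lemma convex_bregman_nonneg:
  fixes g :: "real^'n \<Rightarrow> real"
  assumes cv: "convex_on UNIV g" and dg: "\<And>z. (g has_derivative (\<lambda>h. G z \<bullet> h)) (at z)"
  shows "0 \<le> bregman g G y x"
proof -
  let ?d = "y - x"
  let ?phi = "\<lambda>t::real. g (x + t *\<^sub>R ?d)"
  have cphi: "convex_on UNIV ?phi"
  proof (rule convex_onI)
    fix t a b :: real assume "0 < t" "t < 1"
    have "x + ((1 - t) *\<^sub>R a + t *\<^sub>R b) *\<^sub>R ?d = (1 - t) *\<^sub>R (x + a *\<^sub>R ?d) + t *\<^sub>R (x + b *\<^sub>R ?d)"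
      by (simp add: algebra_simps)
    then show "?phi ((1 - t) *\<^sub>R a + t *\<^sub>R b) \<le> (1 - t) * ?phi a + t * ?phi b"
      using convex_onD[OF cv, of t "x + a *\<^sub>R ?d" "x + b *\<^sub>R ?d"] \<open>0<t\<close> \<open>t<1\<close> by simp
  qed simp
  have "?phi 1 - ?phi 0 \<ge> (G (x + 0 *\<^sub>R ?d) \<bullet> ?d) * (1 - 0)"
    by (rule convex_on_imp_above_tangent[OF cphi]) (use line_deriv[OF dg, of x ?d 0 UNIV] in auto)
  then show ?thesis by (simp add: bregman_def)
qed

lemma lip_bregman_upper:
  fixes g :: "real^'n \<Rightarrow> real"
  assumes dg: "\<And>z. (g has_derivative (\<lambda>h. G z \<bullet> h)) (at z)"
    and lip: "\<forall>a b. norm (G a - G b) \<le> L * norm (a - b)"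
  shows "bregman g G y x \<le> \<bar>L\<bar> * (norm (y - x))\<^sup>2"
proof -
  let ?d = "y - x"
  let ?phi = "\<lambda>t::real. g (x + t *\<^sub>R ?d)"
  have "\<And>t. ((\<lambda>t. g (x + t *\<^sub>R ?d)) has_derivative (\<lambda>s. s * (G (x + t *\<^sub>R ?d) \<bullet> ?d))) (at t within {0..1})"
    using line_deriv[OF dg, unfolded has_field_derivative_def] by (simp add: mult.commute[of _ "G _ \<bullet> _"])
  then have "\<exists>t\<in>{0<..<1}. ?phi 1 - ?phi 0 = (\<lambda>s. s * (G (x + t *\<^sub>R ?d) \<bullet> ?d)) (1 - 0)"
    by (intro mvt_simple) auto
  then obtain t where t: "t \<in> {0<..<1}" "?phi 1 - ?phi 0 = G (x + t *\<^sub>R ?d) \<bullet> ?d"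
    by auto
  then have "bregman g G y x = (G (x + t *\<^sub>R ?d) - G x) \<bullet> ?d"
    by (simp add: bregman_def inner_diff_left)
  also have "\<dots> \<le> norm (G (x + t *\<^sub>R ?d) - G x) * norm ?d" by (rule norm_cauchy_schwarz)
  also have "\<dots> \<le> (\<bar>L\<bar> * norm ?d) * norm ?d"
  proof (rule mult_right_mono)
    have "norm (G (x + t *\<^sub>R ?d) - G x) \<le> L * norm (t *\<^sub>R ?d)" using lip by (metis add_diff_cancel_left')
    also have "\<dots> \<le> \<bar>L\<bar> * norm ?d"
    proof -
      have n: "norm (t *\<^sub>R ?d) = t * norm ?d" "t * norm ?d \<le> norm ?d" using t(1)
        by (auto intro!: mult_left_le_one_le)
      have "L * (t * norm ?d) \<le> \<bar>L\<bar> * (t * norm ?d)" by (rule mult_right_mono) (use t(1) in auto)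
      also have "\<dots> \<le> \<bar>L\<bar> * norm ?d" by (rule mult_left_mono[OF n(2)]) simp
      finally show ?thesis using n(1) by (simp only:)
    qed
    finally show "norm (G (x + t *\<^sub>R ?d) - G x) \<le> \<bar>L\<bar> * norm ?d" .
  qed simp
  finally show ?thesis by (simp add: power2_eq_square mult.assoc)
qed




lemma normsq_add: assumes "SPD M"
  shows "normsq M (a + b) = normsq M a + 2 * ((M *v a) \<bullet> b) + normsq M b"
  using spd_sym[OF assms, of b a]
  by (simp add: normsq_def matrix_vector_right_distrib inner_add_left inner_add_right inner_commute)

lemma normsq_diff: assumes "SPD M"
  shows "normsq M (a - b) = normsq M a - 2 * ((M *v a) \<bullet> b) + normsq M b"
  using spd_sym[OF assms, of b a]
  by (simp add: normsq_def matrix_vector_mult_diff_distrib inner_diff_left inner_diff_right inner_commute)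

lemma normsq_scale: "normsq M (c *\<^sub>R x) = c\<^sup>2 * normsq M x"
  by (simp add: normsq_def matrix_vector_mult_scaleR power2_eq_square)

lemma normsq_minus_commute: "normsq M (x - y) = normsq M (y - x)"
  by (simp add: normsq_def matrix_vector_mult_diff_distrib inner_diff_left inner_diff_right)

lemma normsq_zero_iff: "SPD M \<Longrightarrow> normsq M x = 0 \<longleftrightarrow> x = 0"
  unfolding SPD_def normsq_def by (metis inner_zero_right less_irrefl matrix_vector_mult_0_right)

lemma young_M: assumes "SPD M" "0 < t"
  shows "2 * ((M *v x) \<bullet> y) \<le> t * normsq M x + normsq M y / t"
proof -
  have "0 \<le> normsq M (t *\<^sub>R x - y)" by (rule normsq_nonneg[OF assms(1)])
  also have "\<dots> = t\<^sup>2 * normsq M x - 2 * t * ((M *v x) \<bullet> y) + normsq M y"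
    by (simp add: normsq_diff[OF assms(1)] normsq_scale matrix_vector_mult_scaleR)
  finally have "2 * t * ((M *v x) \<bullet> y) \<le> t * (t * normsq M x + normsq M y / t)"
    using assms(2) by (simp add: power2_eq_square algebra_simps)
  then show ?thesis using assms(2) by (simp add: mult.assoc)
qed

lemma cs_M: assumes "SPD M"
  shows "(M *v x) \<bullet> y \<le> sqrt (normsq M x) * sqrt (normsq M y)"
proof (cases "x = 0 \<or> y = 0")
  case True then show ?thesis by (auto simp: normsq_def)
next
  case False
  let ?a = "sqrt (normsq M x)" and ?b = "sqrt (normsq M y)"
  have pa: "0 < normsq M x" "0 < normsq M y" using False assms normsq_nonneg normsq_zero_iff
    by (metis order_le_less)+
  then have "0 < ?a" "0 < ?b" by auto
  then have "2 * ((M *v x) \<bullet> y) \<le> (?b / ?a) * normsq M x + normsq M y / (?b / ?a)"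
    by (intro young_M[OF assms]) auto
  also have "(?b / ?a) * normsq M x = ?a * ?b"
  proof -
    have "normsq M x = ?a * ?a" using pa by simp
    then show ?thesis using \<open>0 < ?a\<close> by (simp add: field_simps)
  qed
  also have "normsq M y / (?b / ?a) = ?a * ?b"
  proof -
    have "normsq M y = ?b * ?b" using pa by simp
    then show ?thesis using \<open>0 < ?b\<close> \<open>0 < ?a\<close> by (simp add: field_simps)
  qed
  finally show ?thesis by simp
qed

lemma dual_normsq: assumes "SPD M"
  shows "normsq M (matrix_inv M *v g) = normsq (matrix_inv M) g"
  using spd_inv_apply(1)[OF assms, of g] by (simp add: normsq_def inner_commute)

lemma cs_dual: assumes "SPD M"
  shows "g \<bullet> y \<le> sqrt (normsq (matrix_inv M) g) * sqrt (normsq M y)"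
  using cs_M[OF assms, of "matrix_inv M *v g" y] spd_inv_apply(1)[OF assms, of g] dual_normsq[OF assms]
  by simp

lemma young_dual: assumes "SPD M" "0 < t"
  shows "2 * (g \<bullet> y) \<le> t * normsq (matrix_inv M) g + normsq M y / t"
  using young_M[OF assms, of "matrix_inv M *v g" y] spd_inv_apply(1)[OF assms(1), of g] dual_normsq[OF assms(1)]
  by simp




lemma bregman_sum: "bregman g G y x + bregman g G x y = (G y - G x) \<bullet> (y - x)"
  by (simp add: bregman_def inner_diff_left inner_diff_right inner_commute)

lemma bregman_lower_dual:
  assumes Q: "SPD Q" and L: "0 < L"
    and nn: "\<And>x y. 0 \<le> bregman g G y x"
    and up: "\<And>x y. bregman g G y x \<le> L / 2 * normsq Q (x - y)"
  shows "normsq (matrix_inv Q) (G y - G x) / (2 * L) \<le> bregman g G y x"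
proof -
  let ?D = "G y - G x"
  let ?s = "matrix_inv Q *v ?D"
  let ?N = "normsq (matrix_inv Q) ?D"
  let ?z = "y - (1 / L) *\<^sub>R ?s"
  have Ds: "?D \<bullet> ?s = ?N" by (simp add: normsq_def inner_commute)
  have ns: "normsq Q ?s = ?N" by (rule dual_normsq[OF Q])
  have a: "g x + G x \<bullet> (?z - x) \<le> g ?z" using nn[where x=x and y="?z"] by (simp add: bregman_def)
  have b: "g ?z \<le> g y + G y \<bullet> (?z - y) + L / 2 * normsq Q (y - ?z)"
    using up[where x=y and y="?z"] by (simp add: bregman_def)
  have c: "normsq Q (y - ?z) = ?N / L\<^sup>2" using ns by (simp add: normsq_scale power_divide)
  have d: "G x \<bullet> (?z - x) = G x \<bullet> (y - x) - (1/L) * (G x \<bullet> ?s)"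
    by (simp add: inner_diff_right algebra_simps)
  have e: "G y \<bullet> (?z - y) = - (1/L) * (G y \<bullet> ?s)" by (simp add: inner_diff_right)
  have "g x + G x \<bullet> (y - x) - (1/L) * (G x \<bullet> ?s) \<le> g y - (1/L) * (G y \<bullet> ?s) + L / 2 * (?N / L\<^sup>2)"
    using a b[unfolded c] d e by linarith
  then have "(1/L) * ((G y - G x) \<bullet> ?s) - L / 2 * (?N / L\<^sup>2) \<le> bregman g G y x"
    by (simp add: bregman_def inner_diff_left algebra_simps)
  moreover have "(1/L) * ((G y - G x) \<bullet> ?s) - L / 2 * (?N / L\<^sup>2) = ?N / (2 * L)"
    using Ds L by (simp add: power2_eq_square field_simps)
  ultimately show ?thesis by simp
qed

lemma cocoercive:
  assumes Q: "SPD Q" and L: "0 < L"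
    and nn: "\<And>x y. 0 \<le> bregman g G y x"
    and up: "\<And>x y. bregman g G y x \<le> L / 2 * normsq Q (x - y)"
  shows "normsq (matrix_inv Q) (G y - G x) \<le> L\<^sup>2 * normsq Q (y - x)"
proof -
  let ?N = "normsq (matrix_inv Q) (G y - G x)"
  let ?P = "normsq Q (y - x)"
  have "normsq (matrix_inv Q) (G x - G y) = ?N" by (rule normsq_minus_commute)
  then have "?N / (2 * L) \<le> bregman g G x y" using bregman_lower_dual[OF assms, of x y] by simp
  then have "?N / (2 * L) + ?N / (2 * L) \<le> (G y - G x) \<bullet> (y - x)"
    using bregman_lower_dual[OF assms, of y x] bregman_sum[of g G y x]
    by linarith
  also have "\<dots> \<le> sqrt ?N * sqrt ?P" by (rule cs_dual[OF Q])
  finally have 1: "?N / L \<le> sqrt ?N * sqrt ?P" by simp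
  have N0: "0 \<le> ?N" using normsq_nonneg[OF spd_inv_spd[OF Q]] .
  have P0: "0 \<le> ?P" using normsq_nonneg[OF Q] .
  show ?thesis
  proof (cases "?N = 0")
    case True then show ?thesis using P0 L by simp
  next
    case False
    then have sN: "0 < sqrt ?N" using N0 by simp
    have ss: "sqrt ?N * sqrt ?N = ?N" using N0 by simp
    have "sqrt ?N * (sqrt ?N / L) = ?N / L" by (simp only: times_divide_eq_right ss)
    then have "sqrt ?N * (sqrt ?N / L) \<le> sqrt ?N * sqrt ?P" using 1 by (simp only:)
    then have "sqrt ?N / L \<le> sqrt ?P" using sN by (rule mult_left_le_imp_le)
    then have "sqrt ?N \<le> L * sqrt ?P" using L by (simp add: divide_le_eq mult.commute)
    then have "(sqrt ?N)\<^sup>2 \<le> (L * sqrt ?P)\<^sup>2" using sN by (intro power_mono) auto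
    then show ?thesis using N0 P0 by (simp add: power_mult_distrib)
  qed
qed




lemma sym_swap: fixes M :: "real^'n^'n" assumes "transpose M = M" shows "(M *v x) \<bullet> y = x \<bullet> (M *v y)"
proof -
  have "x \<bullet> (M *v y) = (x v* M) \<bullet> y" by (simp add: dot_lmul_matrix)
  also have "\<dots> = (transpose M *v x) \<bullet> y" by simp
  also have "\<dots> = (M *v x) \<bullet> y" using assms by simp
  finally show ?thesis by simp
qed

lemma quad_expand: fixes M :: "real^'n^'n" assumes "transpose M = M"
  shows "(M *v (a + t *\<^sub>R d)) \<bullet> (a + t *\<^sub>R d) = (M *v a) \<bullet> a + 2 * t * ((M *v a) \<bullet> d) + t\<^sup>2 * ((M *v d) \<bullet> d)"
  using sym_swap[OF assms, of d a]
  by (simp add: matrix_vector_right_distrib matrix_vector_mult_scaleR inner_add_left inner_add_right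
      inner_commute power2_eq_square algebra_simps)

lemma cont_quad: fixes M :: "real^'n^'n" shows "continuous_on S (\<lambda>x::real^'n. (M *v x) \<bullet> x)"
  by (intro continuous_intros linear_continuous_on matrix_vector_mul_bounded_linear)

lemma quad_homog: fixes M :: "real^'n^'n" shows "(M *v (c *\<^sub>R x)) \<bullet> (c *\<^sub>R x) = c\<^sup>2 * ((M *v x) \<bullet> x)"
  by (simp add: matrix_vector_mult_scaleR power2_eq_square)

lemma quad_lower:
  fixes M :: "real^'n^'n"
  assumes pos: "\<And>x. x \<noteq> 0 \<Longrightarrow> 0 < (M *v x) \<bullet> x"
  shows "\<exists>c>0. \<forall>x. c * (norm x)\<^sup>2 \<le> (M *v x) \<bullet> x"
proof -
  have "sphere (0::real^'n) 1 \<noteq> {}" by simp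
  then obtain x0 where x0: "x0 \<in> sphere 0 1" "\<forall>y\<in>sphere 0 1. (M *v x0) \<bullet> x0 \<le> (M *v y) \<bullet> y"
    using continuous_attains_inf[OF compact_sphere _ cont_quad] by blast
  have "x0 \<noteq> 0" using x0 by auto
  then have cpos: "0 < (M *v x0) \<bullet> x0" by (rule pos)
  have "(M *v x0) \<bullet> x0 * (norm x)\<^sup>2 \<le> (M *v x) \<bullet> x" for x
  proof (cases "x = 0")
    case False
    let ?u = "(1 / norm x) *\<^sub>R x"
    have "?u \<in> sphere 0 1" using False by simp
    then have "(M *v x0) \<bullet> x0 \<le> (M *v ?u) \<bullet> ?u" using x0 by blast
    also have "\<dots> = (1 / norm x)\<^sup>2 * ((M *v x) \<bullet> x)" by (rule quad_homog)
    finally show ?thesis using False by (simp add: field_simps power2_eq_square)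
  qed simp
  then show ?thesis using cpos by blast
qed

lemma quad_upper:
  fixes M :: "real^'n^'m"
  shows "\<exists>K>0. \<forall>x y. \<bar>(M *v x) \<bullet> y\<bar> \<le> K * (norm x * norm y)"
proof -
  obtain K where K: "K > 0" "\<And>x. norm (M *v x) \<le> norm x * K"
    using bounded_linear.pos_bounded[OF matrix_vector_mul_bounded_linear[of M]] by blast
  have "\<bar>(M *v x) \<bullet> y\<bar> \<le> K * (norm x * norm y)" for x y
  proof -
    have "\<bar>(M *v x) \<bullet> y\<bar> \<le> norm (M *v x) * norm y" by (rule Cauchy_Schwarz_ineq2)
    also have "\<dots> \<le> (norm x * K) * norm y" by (rule mult_right_mono[OF K(2)]) simp
    finally show ?thesis by (simp add: ac_simps)
  qed
  then show ?thesis using K(1) by blast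
qed




lemma rayleigh:
  fixes M Q :: "real^'n^'n"
  assumes Q: "SPD Q" and M: "transpose M = M"
  shows "\<exists>l q0. q0 \<noteq> 0 \<and> M *v q0 = l *\<^sub>R (Q *v q0) \<and> (\<forall>q. (M *v q) \<bullet> q \<le> l * normsq Q q)"
proof -
  let ?R = "\<lambda>q. ((M *v q) \<bullet> q) / normsq Q q"
  have den: "0 < normsq Q q" if "q \<noteq> 0" for q using Q that by (simp add: SPD_def normsq_def)
  have "continuous_on (sphere 0 1) ?R"
    unfolding normsq_def
  proof (intro continuous_on_divide cont_quad ballI)
    fix q :: "real^'n" assume "q \<in> sphere 0 1"
    then have "q \<noteq> 0" by auto
    then show "(Q *v q) \<bullet> q \<noteq> 0" using den[of q] by (simp add: normsq_def)
  qed
  moreover have "sphere (0::real^'n) 1 \<noteq> {}" by simp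
  ultimately obtain q0 where q0: "q0 \<in> sphere 0 1" "\<forall>y\<in>sphere 0 1. ?R y \<le> ?R q0"
    using continuous_attains_sup[OF compact_sphere] by blast
  define l where "l = ?R q0"
  have q0nz: "q0 \<noteq> 0" using q0 by auto
  have le: "(M *v q) \<bullet> q \<le> l * normsq Q q" for q
  proof (cases "q = 0")
    case True then show ?thesis by (simp add: normsq_def)
  next
    case False
    let ?u = "(1 / norm q) *\<^sub>R q"
    have "?u \<in> sphere 0 1" using False by simp
    then have "?R ?u \<le> l" using q0 l_def by blast
    moreover have "?R ?u = ?R q"
      using False unfolding normsq_def quad_homog by simp
    ultimately have "?R q \<le> l" by simp
    then show ?thesis using den[OF False] by (simp add: divide_le_eq mult.commute)
  qed
  have l0: "(M *v q0) \<bullet> q0 - l * normsq Q q0 = 0" using den[OF q0nz] by (simp add: l_def)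
  let ?v = "M *v q0 - l *\<^sub>R (Q *v q0)"
  have Qs: "transpose Q = Q" using Q by (simp add: SPD_def)
  have "?v = 0"
  proof (rule ccontr)
    assume vnz: "?v \<noteq> 0"
    let ?g = "(M *v ?v) \<bullet> ?v - l * normsq Q ?v"
    let ?n = "?v \<bullet> ?v"
    have npos: "0 < ?n" using vnz by simp
    define s where "s = ?n / (\<bar>?g\<bar> + 1)"
    have spos: "0 < s" using npos by (simp add: s_def)
    have "(M *v (q0 + s *\<^sub>R ?v)) \<bullet> (q0 + s *\<^sub>R ?v) - l * normsq Q (q0 + s *\<^sub>R ?v) \<le> 0"
      using le[of "q0 + s *\<^sub>R ?v"] by simp
    also have "(M *v (q0 + s *\<^sub>R ?v)) \<bullet> (q0 + s *\<^sub>R ?v) - l * normsq Q (q0 + s *\<^sub>R ?v)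
        = ((M *v q0) \<bullet> q0 - l * normsq Q q0) + 2 * s * ((M *v q0) \<bullet> ?v - l * ((Q *v q0) \<bullet> ?v)) + s\<^sup>2 * ?g"
      unfolding normsq_def quad_expand[OF M] quad_expand[OF Qs] by (simp add: algebra_simps)
    also have "(M *v q0) \<bullet> ?v - l * ((Q *v q0) \<bullet> ?v) = ?n" by (simp add: inner_diff_left)
    finally have "2 * s * ?n + s\<^sup>2 * ?g \<le> 0" using l0 by simp
    moreover have "s * ?n < 2 * s * ?n + s\<^sup>2 * ?g"
    proof -
      have "s * \<bar>?g\<bar> < ?n" using npos by (simp add: s_def field_simps)
      then have "s * (s * \<bar>?g\<bar>) < s * ?n" using spos by simp
      moreover have "s\<^sup>2 * (- \<bar>?g\<bar>) \<le> s\<^sup>2 * ?g" by (rule mult_left_mono) auto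
      then have "- (s * (s * \<bar>?g\<bar>)) \<le> s\<^sup>2 * ?g" by (simp add: power2_eq_square)
      ultimately show ?thesis by linarith
    qed
    moreover have "0 < s * ?n" using spos npos by simp
    ultimately show False by linarith
  qed
  then have "M *v q0 = l *\<^sub>R (Q *v q0)" by simp
  then show ?thesis using q0nz le by blast
qed




lemma eig_finite:
  fixes M Q :: "real^'n^'n"
  assumes Q: "SPD Q" and M: "transpose M = M"
  shows "finite {c. \<exists>v. v \<noteq> 0 \<and> M *v v = c *\<^sub>R (Q *v v)}"
proof -
  define S where "S = {c. \<exists>v. v \<noteq> 0 \<and> M *v v = c *\<^sub>R (Q *v v)}"
  define pick where "pick c = (SOME v. v \<noteq> 0 \<and> M *v v = c *\<^sub>R (Q *v v))" for c
  have pk: "pick c \<noteq> 0 \<and> M *v pick c = c *\<^sub>R (Q *v pick c)" if "c \<in> S" for c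
  proof -
    from that obtain v where "v \<noteq> 0 \<and> M *v v = c *\<^sub>R (Q *v v)" unfolding S_def by blast
    then show ?thesis unfolding pick_def by (rule someI)
  qed
  have Qpos: "0 < (Q *v v) \<bullet> v" if "v \<noteq> 0" for v using Q that by (simp add: SPD_def)
  have Qs: "transpose Q = Q" using Q by (simp add: SPD_def)
  have orth: "(Q *v pick c) \<bullet> pick d = 0" if "c \<in> S" "d \<in> S" "c \<noteq> d" for c d
  proof -
    have "(M *v pick c) \<bullet> pick d = (M *v pick d) \<bullet> pick c"
      using sym_swap[OF M, of "pick c" "pick d"] by (simp add: inner_commute)
    then have "c * ((Q *v pick c) \<bullet> pick d) = d * ((Q *v pick d) \<bullet> pick c)"
      using pk[OF that(1)] pk[OF that(2)] by simp
    moreover have "(Q *v pick d) \<bullet> pick c = (Q *v pick c) \<bullet> pick d"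
      using sym_swap[OF Qs, of "pick c" "pick d"] by (simp add: inner_commute)
    ultimately have "(c - d) * ((Q *v pick c) \<bullet> pick d) = 0" by (simp add: algebra_simps)
    then show ?thesis using that(3) by simp
  qed
  have injp: "inj_on pick S"
  proof (rule inj_onI)
    fix c d assume cd: "c \<in> S" "d \<in> S" "pick c = pick d"
    show "c = d"
    proof (rule ccontr)
      assume "c \<noteq> d"
      then have "(Q *v pick c) \<bullet> pick c = 0" using orth[OF cd(1,2)] cd(3) by simp
      then show False using Qpos pk[OF cd(1)] by fastforce
    qed
  qed
  have "independent (pick ` S)"
    unfolding independent_explicit_finite_subsets
  proof (intro allI impI ballI)
    fix U u w assume U: "U \<subseteq> pick ` S" "finite U" and sum0: "(\<Sum>v\<in>U. u v *\<^sub>R v) = 0" and w: "w \<in> U"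
    obtain cw where cw: "cw \<in> S" "w = pick cw" using U w by blast
    have "0 = (Q *v w) \<bullet> (\<Sum>v\<in>U. u v *\<^sub>R v)" using sum0 by simp
    also have "\<dots> = (\<Sum>v\<in>U. u v * ((Q *v w) \<bullet> v))" by (simp add: inner_sum_right)
    also have "\<dots> = u w * ((Q *v w) \<bullet> w) + (\<Sum>v\<in>U - {w}. u v * ((Q *v w) \<bullet> v))"
      using U(2) w by (simp add: sum.remove)
    also have "(\<Sum>v\<in>U - {w}. u v * ((Q *v w) \<bullet> v)) = 0"
    proof (rule sum.neutral, rule ballI)
      fix v assume v: "v \<in> U - {w}"
      then obtain cv where cv: "cv \<in> S" "v = pick cv" using U by blast
      have "cv \<noteq> cw" using v cv cw by auto
      then show "u v * ((Q *v w) \<bullet> v) = 0" using orth[OF cw(1) cv(1)] cv cw by simp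
    qed
    finally have "u w * ((Q *v w) \<bullet> w) = 0" by simp
    moreover have "0 < (Q *v w) \<bullet> w" using Qpos pk[OF cw(1)] cw(2) by simp
    ultimately show "u w = 0" by simp
  qed
  then have "finite (pick ` S)" using independent_bound by blast
  then have "finite S" using finite_imageD injp by blast
  then show ?thesis by (simp add: S_def)
qed

lemma lambda_max_char:
  fixes M Q :: "real^'n^'n"
  assumes Q: "SPD Q" and M: "transpose M = M"
  shows "\<And>q. (M *v q) \<bullet> q \<le> lambda_max (matrix_inv Q ** M) * normsq Q q"
    and "(\<And>q. 0 \<le> (M *v q) \<bullet> q) \<Longrightarrow> 0 \<le> lambda_max (matrix_inv Q ** M)"
proof -
  obtain l q0 where l: "q0 \<noteq> 0" "M *v q0 = l *\<^sub>R (Q *v q0)" "\<forall>q. (M *v q) \<bullet> q \<le> l * normsq Q q"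
    using rayleigh[OF Q M] by (elim exE conjE)
  note l3 = l(3)[rule_format]
  define S' where "S' = {c. \<exists>v. v \<noteq> 0 \<and> M *v v = c *\<^sub>R (Q *v v)}"
  have den: "0 < normsq Q q" if "q \<noteq> 0" for q using Q that by (simp add: SPD_def normsq_def)
  have seq: "{c. \<exists>v. v \<noteq> 0 \<and> (matrix_inv Q ** M) *v v = c *\<^sub>R v} = S'"
  proof -
    have "(matrix_inv Q ** M) *v v = c *\<^sub>R v \<longleftrightarrow> M *v v = c *\<^sub>R (Q *v v)" for v c
    proof
      assume "(matrix_inv Q ** M) *v v = c *\<^sub>R v"
      then have "Q *v (matrix_inv Q *v (M *v v)) = Q *v (c *\<^sub>R v)" by (simp add: matrix_vector_mul_assoc)
      then show "M *v v = c *\<^sub>R (Q *v v)" by (simp add: spd_inv_apply[OF Q] matrix_vector_mult_scaleR)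
    next
      assume "M *v v = c *\<^sub>R (Q *v v)"
      then have "matrix_inv Q *v (M *v v) = matrix_inv Q *v (c *\<^sub>R (Q *v v))" by simp
      then show "(matrix_inv Q ** M) *v v = c *\<^sub>R v"
        by (simp add: spd_inv_apply[OF Q] matrix_vector_mult_scaleR matrix_vector_mul_assoc[symmetric])
    qed
    then show ?thesis by (simp add: S'_def)
  qed
  have lin: "l \<in> S'" unfolding S'_def mem_Collect_eq by (rule exI[of _ q0]) (use l(1,2) in simp)
  have lmax: "c \<le> l" if "c \<in> S'" for c
  proof -
    from that obtain v where v: "v \<noteq> 0" "M *v v = c *\<^sub>R (Q *v v)" unfolding S'_def mem_Collect_eq by meson
    have "(M *v v) \<bullet> v = c * normsq Q v" using v(2) by (simp add: normsq_def)
    then have "c * normsq Q v \<le> l * normsq Q v" using l3[of v] by linarith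
    then show "c \<le> l" by (rule mult_right_le_imp_le[OF _ den[OF v(1)]])
  qed
  have "lambda_max (matrix_inv Q ** M) = l"
    unfolding lambda_max_def seq
    by (rule Max_eqI) (use eig_finite[OF Q M] lin lmax in \<open>auto simp: S'_def\<close>)
  then show "\<And>q. (M *v q) \<bullet> q \<le> lambda_max (matrix_inv Q ** M) * normsq Q q" using l3 by simp
  show "0 \<le> lambda_max (matrix_inv Q ** M)" if "\<And>q. 0 \<le> (M *v q) \<bullet> q"
  proof -
    have "0 \<le> l * normsq Q q0" using that[of q0] l(2) by (simp add: normsq_def)
    then show ?thesis using \<open>lambda_max _ = l\<close> den[OF l(1)] by (simp add: zero_le_mult_iff)
  qed
qed




lemma exists_nonzero: "\<exists>z::real^'n. z \<noteq> 0"
proof -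
  have "sphere (0::real^'n) 1 \<noteq> {}" by simp
  then obtain z :: "real^'n" where "z \<in> sphere 0 1" by blast
  then show ?thesis by (intro exI[of _ z]) auto
qed

lemma bregman_self: "bregman g G x x = 0" by (simp add: bregman_def)

lemma normsq_pos: "SPD M \<Longrightarrow> z \<noteq> 0 \<Longrightarrow> 0 < normsq M z"
  by (simp add: SPD_def normsq_def)

lemma cvx_const_prop:
  fixes g :: "real^'n \<Rightarrow> real"
  assumes Q: "SPD Q" and nn: "\<And>x y. 0 \<le> bregman g G y x"
  shows "\<And>x y. cvx_const g G Q / 2 * normsq Q (x - y) \<le> bregman g G y x"
    and "\<And>m. (\<forall>x y. m / 2 * normsq Q (x - y) \<le> bregman g G y x) \<Longrightarrow> m \<le> cvx_const g G Q"
proof -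
  define S where "S = {m. \<forall>x y. m / 2 * normsq Q (x - y) \<le> bregman g G y x}"
  have cS: "cvx_const g G Q = Sup S" by (simp add: cvx_const_def S_def)
  have S0: "0 \<in> S" using nn by (simp add: S_def)
  obtain z :: "real^'n" where z: "z \<noteq> 0" using exists_nonzero by blast
  have nz: "0 < normsq Q (z - 0)" using normsq_pos[OF Q] z by simp
  have ub: "m \<le> 2 * bregman g G 0 z / normsq Q (z - 0)" if "m \<in> S" for m
  proof -
    have "m / 2 * normsq Q (z - 0) \<le> bregman g G 0 z" using that unfolding S_def by blast
    then show ?thesis using nz by (simp add: field_simps)
  qed
  then have bdd: "bdd_above S" by (rule bdd_aboveI)
  show "\<And>m. (\<forall>x y. m / 2 * normsq Q (x - y) \<le> bregman g G y x) \<Longrightarrow> m \<le> cvx_const g G Q"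
    unfolding cS by (rule cSup_upper[OF _ bdd]) (simp add: S_def)
  show "cvx_const g G Q / 2 * normsq Q (x - y) \<le> bregman g G y x" for x y
  proof (cases "x = y")
    case True then show ?thesis by (simp add: bregman_self normsq_def)
  next
    case False
    then have n: "0 < normsq Q (x - y)" using normsq_pos[OF Q] by simp
    have "m \<le> 2 * bregman g G y x / normsq Q (x - y)" if "m \<in> S" for m
    proof -
      have "m / 2 * normsq Q (x - y) \<le> bregman g G y x" using that by (simp add: S_def)
      then show ?thesis using n by (simp add: field_simps)
    qed
    then have "Sup S \<le> 2 * bregman g G y x / normsq Q (x - y)"
      using S0 by (intro cSup_least) auto
    then show ?thesis using n unfolding cS by (simp add: field_simps)
  qed
qed

lemma smooth_const_prop:
  fixes g :: "real^'n \<Rightarrow> real"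
  assumes Q: "SPD Q" and nn: "\<And>x y. 0 \<le> bregman g G y x"
    and ex: "\<exists>L. \<forall>x y. bregman g G y x \<le> L / 2 * normsq Q (x - y)"
  shows "\<And>x y. bregman g G y x \<le> smooth_const g G Q / 2 * normsq Q (x - y)"
proof -
  define S where "S = {L. \<forall>x y. bregman g G y x \<le> L / 2 * normsq Q (x - y)}"
  have cS: "smooth_const g G Q = Inf S" by (simp add: smooth_const_def S_def)
  have Sne: "S \<noteq> {}" using ex by (auto simp: S_def)
  show "bregman g G y x \<le> smooth_const g G Q / 2 * normsq Q (x - y)" for x y
  proof (cases "x = y")
    case True then show ?thesis by (simp add: bregman_self normsq_def)
  next
    case False
    then have n: "0 < normsq Q (x - y)" using normsq_pos[OF Q] by simp
    have "2 * bregman g G y x / normsq Q (x - y) \<le> L" if "L \<in> S" for L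
    proof -
      have "bregman g G y x \<le> L / 2 * normsq Q (x - y)" using that by (simp add: S_def)
      then show ?thesis using n by (simp add: field_simps)
    qed
    then have "2 * bregman g G y x / normsq Q (x - y) \<le> Inf S"
      using Sne by (intro cInf_greatest) auto
    then show ?thesis using n unfolding cS by (simp add: field_simps)
  qed
qed

lemma lip_const_prop:
  fixes F :: "real^'n \<Rightarrow> real^'n"
  assumes M: "SPD M"
    and ex: "\<exists>L. 0 \<le> L \<and> (\<forall>x y. sqrt (normsq M (F x - F y)) \<le> L * sqrt (normsq M (x - y)))"
  shows "0 \<le> lip_const F M"
    and "\<And>x y. sqrt (normsq M (F x - F y)) \<le> lip_const F M * sqrt (normsq M (x - y))"
proof -
  define S where "S = {L. 0 \<le> L \<and> (\<forall>x y. sqrt (normsq M (F x - F y)) \<le> L * sqrt (normsq M (x - y)))}"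
  have cS: "lip_const F M = Inf S" by (simp add: lip_const_def S_def)
  have Sne: "S \<noteq> {}" using ex by (auto simp: S_def)
  show "0 \<le> lip_const F M" unfolding cS using Sne by (intro cInf_greatest) (auto simp: S_def)
  show "sqrt (normsq M (F x - F y)) \<le> lip_const F M * sqrt (normsq M (x - y))" for x y
  proof (cases "x = y")
    case True then show ?thesis by (simp add: normsq_def)
  next
    case False
    then have n: "0 < sqrt (normsq M (x - y))" using normsq_pos[OF M] by simp
    have "sqrt (normsq M (F x - F y)) / sqrt (normsq M (x - y)) \<le> L" if "L \<in> S" for L
    proof -
      have "sqrt (normsq M (F x - F y)) \<le> L * sqrt (normsq M (x - y))" using that by (simp add: S_def)
      then show ?thesis using n by (simp add: field_simps)
    qed
    then have "sqrt (normsq M (F x - F y)) / sqrt (normsq M (x - y)) \<le> Inf S"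
      using Sne by (intro cInf_greatest) auto
    then show ?thesis using n unfolding cS by (simp add: field_simps)
  qed
qed




lemma energy_id: assumes V: "SPD V"
  shows "1/2 * normsq V (a - s) - 1/2 * normsq V (b - s) = (V *v (a - b)) \<bullet> (a - s) - 1/2 * normsq V (a - b)"
proof -
  have "b - s = (a - s) - (a - b)" by simp
  then have "normsq V (b - s) = normsq V (a - s) - 2 * ((V *v (a - s)) \<bullet> (a - b)) + normsq V (a - b)"
    using normsq_diff[OF V] by metis
  moreover have "(V *v (a - s)) \<bullet> (a - b) = (V *v (a - b)) \<bullet> (a - s)"
    using spd_sym[OF V, of "a - s" "a - b"] by (simp add: inner_commute)
  ultimately show ?thesis by linarith
qed

lemma transp_inner: fixes B :: "real^'m^'n" shows "(B *v x) \<bullet> y = x \<bullet> (transpose B *v y)"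
  by (simp add: dot_lmul_matrix[symmetric] inner_commute)

lemma M_quad: fixes B :: "real^'m^'n" and Vi :: "real^'m^'m"
  shows "((B ** Vi ** transpose B) *v q) \<bullet> q = normsq Vi (transpose B *v q)"
  by (simp add: normsq_def matrix_vector_mul_assoc[symmetric] transp_inner[of B] del: transpose_matrix_vector)

lemma M_sym: fixes B :: "real^'m^'n" and V :: "real^'m^'m"
  assumes V: "SPD V" shows "transpose (B ** matrix_inv V ** transpose B) = B ** matrix_inv V ** transpose B"
  using spd_inv_spd[OF V] by (simp add: matrix_transpose_mul SPD_def matrix_mul_assoc)

lemma bregman_hB: fixes B :: "real^'m^'n" and V :: "real^'m^'m" and x y :: "real^'n"
  assumes V: "SPD V"
  shows "bregman (hB h B V) (ghB gh B V) y x = bregman h gh y x + 1/2 * normsq (B ** matrix_inv V ** transpose B) (y - x)"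
proof -
  let ?M = "B ** matrix_inv V ** transpose B"
  have s: "(?M *v x) \<bullet> y = (?M *v y) \<bullet> x" using sym_swap[OF M_sym[OF V], where x=x and y=y] by (simp add: inner_commute)
  show ?thesis
    unfolding bregman_def hB_def ghB_def normsq_def
    using s by (simp add: matrix_vector_mult_diff_distrib inner_diff_left inner_diff_right inner_add_left
        inner_commute algebra_simps del: transpose_matrix_vector)
qed

lemma sq_comb: fixes c a b X Y :: real
  shows "2 * (c * (a * X + b * Y)) \<le> X\<^sup>2 + Y\<^sup>2 + c\<^sup>2 * (a\<^sup>2 + b\<^sup>2)"
proof -
  have "0 \<le> (X - c * a)\<^sup>2 + (Y - c * b)\<^sup>2" by simp
  moreover have "(X - c * a)\<^sup>2 + (Y - c * b)\<^sup>2 = X\<^sup>2 + Y\<^sup>2 + c\<^sup>2 * (a\<^sup>2 + b\<^sup>2) - 2 * (c * (a * X + b * Y))"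
    by (simp add: power2_eq_square algebra_simps)
  ultimately show ?thesis by linarith
qed




declare transpose_matrix_vector [simp del]

lemma lin5: fixes P T Q R D X Y U :: real
  shows "P \<le> T \<Longrightarrow> Q = P + R \<Longrightarrow> D = Q - 1/2 * Y - 1/2 * X \<Longrightarrow> R \<le> (X + Y + U) / 2 \<Longrightarrow> D \<le> T + U / 2"
  by (simp add: field_simps)

lemma lin6: fixes a b c m :: real shows "a - b \<le> c - m * a \<Longrightarrow> (1 + m) * a \<le> b + c"
  by (simp add: algebra_simps)

lemma one_step:
  fixes B :: "real^'m^'n" and V :: "real^'m^'m" and Q :: "real^'n^'n"
    and f :: "real^'m \<Rightarrow> real" and gf :: "real^'m \<Rightarrow> real^'m"
    and h :: "real^'n \<Rightarrow> real" and gh :: "real^'n \<Rightarrow> real^'n"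
    and ustar u u1 uh :: "real^'m" and pstar p p1 :: "real^'n"
    and \<alpha> \<epsilon> \<mu> L \<mu>h Lh Le lam :: real
  assumes V: "SPD V" and Q: "SPD Q"
    and saddle1: "gf ustar + transpose B *v pstar = 0"
    and saddle2: "B *v ustar = gh pstar"
    and uh: "uh = u - matrix_inv V *v (gf u + transpose B *v p)"
    and p1: "p1 = p - \<alpha> *\<^sub>R (matrix_inv Q *v (gh p - B *v uh))"
    and res: "normsq (matrix_inv V) (gf u1 + (1 / \<alpha>) *\<^sub>R (V *v (u1 - u + \<alpha> *\<^sub>R (matrix_inv V *v (transpose B *v p1))))) \<le> \<epsilon>"
    and fS: "in_S11 f gf V \<mu> L" and \<mu>pos: "0 < \<mu>" and \<mu>L: "\<mu> \<le> L" and L2: "L < 2"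
    and hnn: "\<And>x y. 0 \<le> bregman h gh y x"
    and hBlow: "\<And>x y. \<mu>h / 2 * normsq Q (x - y) \<le> bregman (hB h B V) (ghB gh B V) y x"
    and hBup: "\<And>x y. bregman (hB h B V) (ghB gh B V) y x \<le> Lh / 2 * normsq Q (x - y)"
    and Lhpos: "0 < Lh"
    and Le0: "0 \<le> Le" and Lelip: "\<And>x y. sqrt (normsq V (eop gf V x - eop gf V y)) \<le> Le * sqrt (normsq V (x - y))"
    and lam0: "0 \<le> lam" and lamb: "\<And>q. ((B ** matrix_inv V ** transpose B) *v q) \<bullet> q \<le> lam * normsq Q q"
    and \<alpha>pos: "0 < \<alpha>"
  shows "(1 + \<alpha> * min (\<mu>/2) ((2 - L) * \<mu>h - \<alpha> * (Lh\<^sup>2 + Le\<^sup>2 * lam))) *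
           (1/2 * normsq V (u1 - ustar) + 1/2 * normsq Q (p1 - pstar))
         \<le> (1/2 * normsq V (u - ustar) + 1/2 * normsq Q (p - pstar)) + \<alpha> / \<mu> * \<epsilon>"
proof -
  let ?Vi = "matrix_inv V" and ?Qi = "matrix_inv Q" and ?Bt = "transpose B"
  let ?M = "B ** matrix_inv V ** transpose B"
  let ?e = "eop gf V"
  let ?G = "ghB gh B V"
  have ViS: "SPD ?Vi" by (rule spd_inv_spd[OF V])
  have QiS: "SPD ?Qi" by (rule spd_inv_spd[OF Q])
  have Mv: "?M *v q = B *v (?Vi *v (?Bt *v q))" for q by (simp add: matrix_vector_mul_assoc matrix_mul_assoc)
  define r where "r = gf u1 + (1 / \<alpha>) *\<^sub>R (V *v (u1 - u + \<alpha> *\<^sub>R (?Vi *v (?Bt *v p1))))"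
  define du where "du = u1 - ustar"
  define dp where "dp = p1 - pstar"
  define g where "g = gf u1 - gf ustar"
  have rle: "normsq ?Vi r \<le> \<epsilon>" using res by (simp add: r_def)
  have "\<alpha> *\<^sub>R r = \<alpha> *\<^sub>R gf u1 + V *v (u1 - u) + \<alpha> *\<^sub>R (?Bt *v p1)"
    using \<alpha>pos by (simp add: r_def scaleR_add_right matrix_vector_right_distrib matrix_vector_mult_scaleR spd_inv_apply[OF V])
  then have s1: "V *v (u1 - u) = \<alpha> *\<^sub>R (r - g - ?Bt *v dp)"
    using saddle1 by (simp add: g_def dp_def matrix_vector_mult_diff_distrib algebra_simps)
  have A1: "(V *v (u1 - u)) \<bullet> du = \<alpha> * (r \<bullet> du - g \<bullet> du - (B *v du) \<bullet> dp)"
    unfolding s1 transp_inner by (simp add: inner_diff_left inner_diff_right inner_commute)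
  have s3: "Q *v (p1 - p) = - \<alpha> *\<^sub>R (gh p - B *v uh)"
  proof -
    have "p1 - p = (- \<alpha>) *\<^sub>R (?Qi *v (gh p - B *v uh))" by (simp add: p1)
    then have "Q *v (p1 - p) = (- \<alpha>) *\<^sub>R (Q *v (?Qi *v (gh p - B *v uh)))"
      by (simp only: matrix_vector_mult_scaleR)
    then show ?thesis by (simp add: spd_inv_apply[OF Q])
  qed
  have s4: "gh p - B *v uh = (?G p - ?G pstar) - B *v (?e u - ?e u1) - B *v du + B *v (?Vi *v g)"
  proof -
    have gs: "gf ustar = - (?Bt *v pstar)" using saddle1 by (simp add: eq_neg_iff_add_eq_0)
    show ?thesis
      unfolding ghB_def eop_def Mv uh du_def g_def gs saddle2[symmetric]
      by (simp add: algebra_simps)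
  qed
  have A2: "(Q *v (p1 - p)) \<bullet> dp = - \<alpha> * ((?G p - ?G pstar) \<bullet> dp - (B *v (?e u - ?e u1)) \<bullet> dp
             - (B *v du) \<bullet> dp + (?Vi *v g) \<bullet> (?Bt *v dp))"
    unfolding s3 s4 by (simp add: inner_diff_left inner_add_left transp_inner[of B "?Vi *v g" dp])
  have EU: "1/2 * normsq V (u1 - ustar) - 1/2 * normsq V (u - ustar) = (V *v (u1 - u)) \<bullet> du - 1/2 * normsq V (u1 - u)"
    unfolding du_def by (rule energy_id[OF V])
  have EP: "1/2 * normsq Q (p1 - pstar) - 1/2 * normsq Q (p - pstar) = (Q *v (p1 - p)) \<bullet> dp - 1/2 * normsq Q (p1 - p)"
    unfolding dp_def by (rule energy_id[OF Q])
  define Rr where "Rr = r \<bullet> du"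
  define Gd where "Gd = g \<bullet> du"
  define N where "N = normsq ?Vi g"
  define W where "W = normsq ?Vi (?Bt *v dp)"
  define GW where "GW = (?Vi *v g) \<bullet> (?Bt *v dp)"
  define H where "H = (gh p1 - gh pstar) \<bullet> dp"
  define K1 where "K1 = (?G p1 - ?G pstar) \<bullet> dp"
  define K2 where "K2 = (?G p1 - ?G p) \<bullet> dp"
  define J where "J = (B *v (?e u - ?e u1)) \<bullet> dp"
  define nd where "nd = normsq V du"
  define Z2 where "Z2 = normsq Q dp"
  define X2 where "X2 = normsq Q (p1 - p)"
  define Y2 where "Y2 = normsq V (u1 - u)"
  have KK: "(?G p - ?G pstar) \<bullet> dp = K1 - K2" by (simp add: K1_def K2_def inner_diff_left)
  define BD where "BD = (B *v du) \<bullet> dp"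
  have A1': "(V *v (u1 - u)) \<bullet> du = \<alpha> * (Rr - Gd - BD)" using A1 by (simp add: Rr_def Gd_def BD_def)
  have A2': "(Q *v (p1 - p)) \<bullet> dp = - \<alpha> * ((K1 - K2) - J - BD + GW)"
    using A2 unfolding KK by (simp add: J_def BD_def GW_def)
  have dE0: "(1/2 * nd + 1/2 * Z2) - (1/2 * normsq V (u - ustar) + 1/2 * normsq Q (p - pstar))
      = (V *v (u1 - u)) \<bullet> du + (Q *v (p1 - p)) \<bullet> dp - 1/2 * Y2 - 1/2 * X2"
    using EU EP unfolding nd_def Z2_def X2_def Y2_def du_def dp_def by linarith
  have dE: "(1/2 * nd + 1/2 * Z2) - (1/2 * normsq V (u - ustar) + 1/2 * normsq Q (p - pstar))
      = \<alpha> * (Rr - Gd - K1 + K2 + J - GW) - 1/2 * Y2 - 1/2 * X2"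
    unfolding dE0 A1' A2' by (simp add: algebra_simps)
  have nd0: "0 \<le> nd" unfolding nd_def by (rule normsq_nonneg[OF V])
  have Z20: "0 \<le> Z2" unfolding Z2_def by (rule normsq_nonneg[OF Q])
  have X20: "0 \<le> X2" unfolding X2_def by (rule normsq_nonneg[OF Q])
  have Y20: "0 \<le> Y2" unfolding Y2_def by (rule normsq_nonneg[OF V])
  have W0: "0 \<le> W" unfolding W_def by (rule normsq_nonneg[OF ViS])
  have Lpos: "0 < L" using \<mu>pos \<mu>L by linarith
  have "2 * Rr \<le> (2 / \<mu>) * normsq ?Vi r + nd / (2 / \<mu>)"
    unfolding Rr_def nd_def by (rule young_dual[OF V]) (use \<mu>pos in simp)
  then have b1: "Rr \<le> \<epsilon> / \<mu> + \<mu> * nd / 4"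
    using rle \<mu>pos by (simp add: field_simps)
  have flow: "\<And>x y. \<mu> / 2 * normsq V (x - y) \<le> bregman f gf y x"
    and fup: "\<And>x y. bregman f gf y x \<le> L / 2 * normsq V (x - y)"
    using fS unfolding in_S11_def by auto
  have fnn: "\<And>x y. 0 \<le> bregman f gf y x"
    using flow normsq_nonneg[OF V] \<mu>pos by (meson order_trans mult_nonneg_nonneg half_gt_zero less_imp_le)
  have Gsum: "Gd = bregman f gf u1 ustar + bregman f gf ustar u1"
    using bregman_sum[of f gf u1 ustar] by (simp add: Gd_def g_def du_def)
  have b2: "\<mu> * nd \<le> Gd"
  proof -
    have "\<mu> / 2 * nd \<le> bregman f gf u1 ustar" using flow[of ustar u1] by (simp add: nd_def du_def normsq_minus_commute)
    moreover have "\<mu> / 2 * nd \<le> bregman f gf ustar u1" using flow[of u1 ustar] by (simp add: nd_def du_def)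
    ultimately show ?thesis using Gsum by linarith
  qed
  have b3: "N / L \<le> Gd"
  proof -
    have "N / (2 * L) \<le> bregman f gf u1 ustar"
      using bregman_lower_dual[OF V Lpos fnn fup, of u1 ustar] by (simp add: N_def g_def)
    moreover have "N / (2 * L) \<le> bregman f gf ustar u1"
      using bregman_lower_dual[OF V Lpos fnn fup, of ustar u1] by (simp add: N_def g_def normsq_minus_commute)
    ultimately show ?thesis using Gsum by (simp add: field_simps)
  qed
  have b4: "- 2 * GW \<le> N / L + L * W"
  proof -
    have "2 * ((?Vi *v g) \<bullet> (- (?Bt *v dp))) \<le> (1 / L) * N + normsq ?Vi (- (?Bt *v dp)) / (1 / L)"
      unfolding N_def by (rule young_M[OF ViS]) (use Lpos in simp)
    moreover have "normsq ?Vi (- (?Bt *v dp)) = W"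
      using normsq_scale[of ?Vi "-1" "?Bt *v dp"] by (simp add: W_def)
    ultimately show ?thesis by (simp add: GW_def mult.commute)
  qed
  have b5: "K1 = H + W"
  proof -
    have "?G p1 - ?G pstar = (gh p1 - gh pstar) + ?M *v dp"
      by (simp add: ghB_def dp_def matrix_vector_mult_diff_distrib)
    then have "K1 = H + (?M *v dp) \<bullet> dp" by (simp add: K1_def H_def inner_add_left)
    then show ?thesis by (simp only: M_quad W_def)
  qed
  have hBnn: "\<And>x y. 0 \<le> bregman (hB h B V) (ghB gh B V) y x"
  proof -
    fix x y
    have "0 \<le> normsq (B ** matrix_inv V ** transpose B) (y - x)"
      unfolding normsq_def[of "B ** matrix_inv V ** transpose B"] M_quad by (rule normsq_nonneg[OF ViS])
    then show "0 \<le> bregman (hB h B V) (ghB gh B V) y x"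
      unfolding bregman_hB[OF V] using hnn[of y x] by simp
  qed
  have b6: "\<mu>h * Z2 \<le> K1"
  proof -
    have "\<mu>h / 2 * Z2 \<le> bregman (hB h B V) ?G p1 pstar" using hBlow[of pstar p1] by (simp add: Z2_def dp_def normsq_minus_commute)
    moreover have "\<mu>h / 2 * Z2 \<le> bregman (hB h B V) ?G pstar p1" using hBlow[of p1 pstar] by (simp add: Z2_def dp_def)
    moreover have "K1 = bregman (hB h B V) ?G p1 pstar + bregman (hB h B V) ?G pstar p1"
      using bregman_sum[of "hB h B V" ?G p1 pstar] by (simp add: K1_def dp_def)
    ultimately show ?thesis by linarith
  qed
  have b7: "0 \<le> H"
    using bregman_sum[of h gh p1 pstar] hnn[of p1 pstar] hnn[of pstar p1] by (simp add: H_def dp_def)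
  have b8: "K2 \<le> Lh * sqrt X2 * sqrt Z2"
  proof -
    have "K2 \<le> sqrt (normsq ?Qi (?G p1 - ?G p)) * sqrt Z2"
      unfolding K2_def Z2_def by (rule cs_dual[OF Q])
    also have "sqrt (normsq ?Qi (?G p1 - ?G p)) \<le> Lh * sqrt X2"
    proof -
      have "normsq ?Qi (?G p1 - ?G p) \<le> Lh\<^sup>2 * X2"
        unfolding X2_def by (rule cocoercive[OF Q Lhpos hBnn hBup])
      then have "sqrt (normsq ?Qi (?G p1 - ?G p)) \<le> sqrt (Lh\<^sup>2 * X2)" by (rule real_sqrt_le_mono)
      then show ?thesis using Lhpos by (simp add: real_sqrt_mult)
    qed
    then have "sqrt (normsq ?Qi (?G p1 - ?G p)) * sqrt Z2 \<le> Lh * sqrt X2 * sqrt Z2"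
      by (rule mult_right_mono) (use Z20 in simp)
    finally show ?thesis .
  qed
  have b9: "J \<le> Le * sqrt lam * sqrt Y2 * sqrt Z2"
  proof -
    have "J = (?Bt *v dp) \<bullet> (?e u - ?e u1)" unfolding J_def by (simp add: transp_inner inner_commute)
    also have "\<dots> \<le> sqrt W * sqrt (normsq V (?e u - ?e u1))"
      unfolding W_def by (rule cs_dual[OF V])
    also have "\<dots> \<le> (sqrt lam * sqrt Z2) * (Le * sqrt Y2)"
    proof (rule mult_mono)
      have "W \<le> lam * Z2" using lamb[of dp] unfolding W_def Z2_def M_quad .
      then show "sqrt W \<le> sqrt lam * sqrt Z2" by (metis real_sqrt_le_mono real_sqrt_mult)
      show "sqrt (normsq V (?e u - ?e u1)) \<le> Le * sqrt Y2"
        using Lelip[of u u1] by (simp add: Y2_def normsq_minus_commute)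
    qed (use lam0 Z20 normsq_nonneg[OF V] in auto)
    finally show ?thesis by (simp add: ac_simps)
  qed
  define LS where "LS = Lh\<^sup>2 + Le\<^sup>2 * lam"
  have T0: "Rr - Gd - K1 - GW \<le> \<epsilon> / \<mu> - \<mu> * nd / 4 - (2 - L) * \<mu>h * Z2 / 2"
  proof -
    have P1: "0 \<le> L * H" using Lpos b7 by simp
    have "(2 - L) * (\<mu>h * Z2) \<le> (2 - L) * K1" by (rule mult_left_mono[OF b6]) (use L2 in simp)
    then have P2: "(2 - L) * \<mu>h * Z2 \<le> 2 * K1 - L * H - L * W" using b5 by (simp add: algebra_simps)
    show ?thesis using b1 b2 b3 b4 P1 P2 by linarith
  qed
  have T1: "\<alpha> * (K2 + J) \<le> (X2 + Y2 + \<alpha>\<^sup>2 * Z2 * LS) / 2"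
  proof -
    have "K2 + J \<le> sqrt Z2 * (Lh * sqrt X2 + (Le * sqrt lam) * sqrt Y2)"
      using b8 b9 by (simp add: algebra_simps)
    then have c1: "\<alpha> * (K2 + J) \<le> (\<alpha> * sqrt Z2) * (Lh * sqrt X2 + (Le * sqrt lam) * sqrt Y2)"
      using \<alpha>pos by (simp add: mult.assoc)
    have c2: "2 * ((\<alpha> * sqrt Z2) * (Lh * sqrt X2 + (Le * sqrt lam) * sqrt Y2))
        \<le> (sqrt X2)\<^sup>2 + (sqrt Y2)\<^sup>2 + (\<alpha> * sqrt Z2)\<^sup>2 * (Lh\<^sup>2 + (Le * sqrt lam)\<^sup>2)"
      by (rule sq_comb)
    have c3: "(sqrt X2)\<^sup>2 + (sqrt Y2)\<^sup>2 + (\<alpha> * sqrt Z2)\<^sup>2 * (Lh\<^sup>2 + (Le * sqrt lam)\<^sup>2) = X2 + Y2 + \<alpha>\<^sup>2 * Z2 * LS"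
      using X20 Y20 Z20 lam0 by (simp add: LS_def power_mult_distrib)
    define A where "A = (\<alpha> * sqrt Z2) * (Lh * sqrt X2 + (Le * sqrt lam) * sqrt Y2)"
    define S where "S = X2 + Y2 + \<alpha>\<^sup>2 * Z2 * LS"
    have "2 * A \<le> S" using c2 unfolding c3 A_def S_def .
    moreover have "\<alpha> * (K2 + J) \<le> A" using c1 unfolding A_def .
    ultimately show ?thesis unfolding S_def[symmetric] by linarith
  qed
  define mk where "mk = min (\<mu>/2) ((2 - L) * \<mu>h - \<alpha> * LS)"
  have dE2: "(1/2 * nd + 1/2 * Z2) - (1/2 * normsq V (u - ustar) + 1/2 * normsq Q (p - pstar))
      \<le> \<alpha> * (\<epsilon> / \<mu> - \<mu> * nd / 4 - (2 - L) * \<mu>h * Z2 / 2) + \<alpha>\<^sup>2 * Z2 * LS / 2"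
  proof -
    have "\<alpha> * (Rr - Gd - K1 - GW) \<le> \<alpha> * (\<epsilon> / \<mu> - \<mu> * nd / 4 - (2 - L) * \<mu>h * Z2 / 2)"
      by (rule mult_left_mono[OF T0]) (use \<alpha>pos in simp)
    moreover have "\<alpha> * (Rr - Gd - K1 + K2 + J - GW) = \<alpha> * (Rr - Gd - K1 - GW) + \<alpha> * (K2 + J)"
      by (simp add: algebra_simps)
    ultimately show ?thesis using dE T1 by (rule lin5)
  qed
  have eq: "\<alpha> * (\<epsilon> / \<mu> - \<mu> * nd / 4 - (2 - L) * \<mu>h * Z2 / 2) + \<alpha>\<^sup>2 * Z2 * LS / 2
      = \<alpha> * \<epsilon> / \<mu> - \<alpha> * (\<mu>/2) * (1/2 * nd) - \<alpha> * ((2 - L) * \<mu>h - \<alpha> * LS) * (1/2 * Z2)"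
    by (simp add: power2_eq_square field_simps)
  have mk1: "mk \<le> \<mu>/2" "mk \<le> (2 - L) * \<mu>h - \<alpha> * LS" unfolding mk_def by (rule min.cobounded1, rule min.cobounded2)
  have m1: "\<alpha> * mk * (1/2 * nd) \<le> \<alpha> * (\<mu>/2) * (1/2 * nd)"
    by (rule mult_right_mono[OF mult_left_mono[OF mk1(1)]]) (use \<alpha>pos nd0 in auto)
  have m2: "\<alpha> * mk * (1/2 * Z2) \<le> \<alpha> * ((2 - L) * \<mu>h - \<alpha> * LS) * (1/2 * Z2)"
    by (rule mult_right_mono[OF mult_left_mono[OF mk1(2)]]) (use \<alpha>pos Z20 in auto)
  have "(1/2 * nd + 1/2 * Z2) - (1/2 * normsq V (u - ustar) + 1/2 * normsq Q (p - pstar))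
      \<le> \<alpha> * \<epsilon> / \<mu> - \<alpha> * mk * (1/2 * nd + 1/2 * Z2)"
    using dE2 eq m1 m2 by (simp add: algebra_simps) 
  then have "(1 + \<alpha> * mk) * (1/2 * nd + 1/2 * Z2)
      \<le> (1/2 * normsq V (u - ustar) + 1/2 * normsq Q (p - pstar)) + \<alpha> * \<epsilon> / \<mu>"
    by (rule lin6)
  then show ?thesis
    unfolding mk_def[symmetric] LS_def[symmetric] nd_def[symmetric] Z2_def[symmetric] du_def[symmetric] dp_def[symmetric]
    by simp
qed




lemma parallelogram_le: assumes V: "SPD V"
  shows "normsq V (a - b) \<le> 2 * normsq V a + 2 * normsq V b"
  using normsq_diff[OF V, of a b] normsq_add[OF V, of a b] normsq_nonneg[OF V, of "a + b"] by linarith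

lemma e_lip:
  fixes f :: "real^'m \<Rightarrow> real" and V :: "real^'m^'m"
  assumes V: "SPD V" and fS: "in_S11 f gf V \<mu> L" and \<mu>pos: "0 < \<mu>" and \<mu>L: "\<mu> \<le> L"
  shows "\<exists>Le. 0 \<le> Le \<and> (\<forall>x y. sqrt (normsq V (eop gf V x - eop gf V y)) \<le> Le * sqrt (normsq V (x - y)))"
proof -
  have flow: "\<And>x y. \<mu> / 2 * normsq V (x - y) \<le> bregman f gf y x"
    and fup: "\<And>x y. bregman f gf y x \<le> L / 2 * normsq V (x - y)"
    using fS unfolding in_S11_def by auto
  have fnn: "\<And>x y. 0 \<le> bregman f gf y x"
    using flow normsq_nonneg[OF V] \<mu>pos by (meson order_trans mult_nonneg_nonneg half_gt_zero less_imp_le)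
  have Lpos: "0 < L" using \<mu>pos \<mu>L by linarith
  have "sqrt (normsq V (eop gf V x - eop gf V y)) \<le> sqrt (2 * (1 + L\<^sup>2)) * sqrt (normsq V (x - y))" for x y
  proof -
    have d: "eop gf V x - eop gf V y = (x - y) - matrix_inv V *v (gf x - gf y)"
      by (simp add: eop_def matrix_vector_mult_diff_distrib)
    have "normsq V (eop gf V x - eop gf V y) \<le> 2 * normsq V (x - y) + 2 * normsq V (matrix_inv V *v (gf x - gf y))"
      unfolding d by (rule parallelogram_le[OF V])
    also have "normsq V (matrix_inv V *v (gf x - gf y)) = normsq (matrix_inv V) (gf x - gf y)"
      by (rule dual_normsq[OF V])
    also have "normsq (matrix_inv V) (gf x - gf y) \<le> L\<^sup>2 * normsq V (x - y)"
      by (rule cocoercive[OF V Lpos fnn fup])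
    finally have "normsq V (eop gf V x - eop gf V y) \<le> 2 * (1 + L\<^sup>2) * normsq V (x - y)"
      by (simp add: algebra_simps)
    then have "sqrt (normsq V (eop gf V x - eop gf V y)) \<le> sqrt (2 * (1 + L\<^sup>2) * normsq V (x - y))"
      by (rule real_sqrt_le_mono)
    then show ?thesis by (simp add: real_sqrt_mult)
  qed
  then show ?thesis by (intro exI[of _ "sqrt (2 * (1 + L\<^sup>2))"]) auto
qed

lemma hB_strong:
  fixes B :: "real^'m^'n" and V :: "real^'m^'m" and Q :: "real^'n^'n"
  assumes V: "SPD V" and Q: "SPD Q" and rk: "rank B = CARD('n)"
    and hnn: "\<And>x y. 0 \<le> bregman h gh y x"
  shows "\<exists>m>0. \<forall>x y. m / 2 * normsq Q (x - y) \<le> bregman (hB h B V) (ghB gh B V) y x"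
proof -
  let ?M = "B ** matrix_inv V ** transpose B"
  have "inj ((*v) (transpose B))" using rk by (simp add: full_rank_injective[symmetric] rank_transpose)
  then have Bt0: "transpose B *v q \<noteq> 0" if "q \<noteq> 0" for q
    using that by (metis inj_eq matrix_vector_mult_0_right)
  have Mpos: "0 < (?M *v q) \<bullet> q" if "q \<noteq> 0" for q
    unfolding M_quad using normsq_pos[OF spd_inv_spd[OF V] Bt0[OF that]] .
  obtain c where c: "c > 0" "\<And>x. c * (norm x)\<^sup>2 \<le> (?M *v x) \<bullet> x"
    using quad_lower[of ?M] Mpos by blast
  obtain K where K: "K > 0" "\<And>x. \<bar>(Q *v x) \<bullet> x\<bar> \<le> K * (norm x * norm x)"
    using quad_upper[of Q] by blast
  have cK: "c / K * normsq Q d \<le> (?M *v d) \<bullet> d" for d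
  proof -
    have "normsq Q d \<le> K * (norm d)\<^sup>2" using K(2)[of d] by (simp add: normsq_def power2_eq_square)
    then have "c / K * normsq Q d \<le> c / K * (K * (norm d)\<^sup>2)"
      by (rule mult_left_mono) (use c K in simp)
    also have "\<dots> = c * (norm d)\<^sup>2" using K by simp
    finally show ?thesis using c(2)[of d] by linarith
  qed
  have "c / K / 2 * normsq Q (x - y) \<le> bregman (hB h B V) (ghB gh B V) y x" for x y
  proof -
    have "c / K * normsq Q (y - x) \<le> normsq ?M (y - x)" using cK unfolding normsq_def[of ?M] .
    then have "c / K / 2 * normsq Q (x - y) \<le> 1/2 * normsq ?M (y - x)"
      by (simp add: normsq_minus_commute[of Q x y])
    then show ?thesis using hnn[of y x] unfolding bregman_hB[OF V] by linarith
  qed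
  moreover have "c / K > 0" using c K by simp
  ultimately show ?thesis by blast
qed

lemma hB_smooth:
  fixes B :: "real^'m^'n" and V :: "real^'m^'m" and Q :: "real^'n^'n" and h :: "real^'n \<Rightarrow> real"
  assumes V: "SPD V" and Q: "SPD Q"
    and h_grad: "\<And>x. (h has_derivative (\<lambda>d. gh x \<bullet> d)) (at x)"
    and gh_lip: "\<exists>L. \<forall>x y. norm (gh x - gh y) \<le> L * norm (x - y)"
  shows "\<exists>L. \<forall>x y. bregman (hB h B V) (ghB gh B V) y x \<le> L / 2 * normsq Q (x - y)"
proof -
  let ?M = "B ** matrix_inv V ** transpose B"
  obtain Lg where Lg: "\<forall>x y. norm (gh x - gh y) \<le> Lg * norm (x - y)" using gh_lip by blast
  obtain KM where KM: "KM > 0" "\<And>x. \<bar>(?M *v x) \<bullet> x\<bar> \<le> KM * (norm x * norm x)"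
    using quad_upper[of ?M] by blast
  obtain c where c: "c > 0" "\<And>x. c * (norm x)\<^sup>2 \<le> (Q *v x) \<bullet> x"
    using quad_lower[of Q] Q by (auto simp: SPD_def)
  define L where "L = 2 * (\<bar>Lg\<bar> + KM) / c"
  have "bregman (hB h B V) (ghB gh B V) y x \<le> L / 2 * normsq Q (x - y)" for x y
  proof -
    have "bregman h gh y x \<le> \<bar>Lg\<bar> * (norm (y - x))\<^sup>2" by (rule lip_bregman_upper[OF h_grad Lg])
    moreover have "1/2 * normsq ?M (y - x) \<le> KM * (norm (y - x))\<^sup>2"
      using KM(2)[of "y - x"] KM(1) by (simp add: normsq_def power2_eq_square)
    ultimately have "bregman (hB h B V) (ghB gh B V) y x \<le> (\<bar>Lg\<bar> + KM) * (norm (y - x))\<^sup>2"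
      unfolding bregman_hB[OF V] by (simp add: algebra_simps)
    also have "\<dots> \<le> (\<bar>Lg\<bar> + KM) * (normsq Q (x - y) / c)"
    proof (rule mult_left_mono)
      have "c * (norm (x - y))\<^sup>2 \<le> normsq Q (x - y)" using c(2)[of "x - y"] by (simp add: normsq_def)
      then show "(norm (y - x))\<^sup>2 \<le> normsq Q (x - y) / c" using c(1) by (simp add: norm_minus_commute field_simps)
    qed (use KM in simp)
    also have "\<dots> = L / 2 * normsq Q (x - y)" using c(1) by (simp add: L_def field_simps)
    finally show ?thesis .
  qed
  then show ?thesis by blast
qed




lemma div_split: fixes d m E0 a e :: real
  shows "d \<noteq> 0 \<Longrightarrow> m \<noteq> 0 \<Longrightarrow> (E0 + 2 * a / m * e) / d = 1 / d * E0 + 2 * a / (d * m) * e"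
  by (simp add: field_simps)

theorem theorem4p4:
  fixes B :: "real^'m^'n"
    and IV :: "real^'m^'m" and IQ :: "real^'n^'n"
    and f :: "real^'m \<Rightarrow> real" and gf :: "real^'m \<Rightarrow> real^'m"
    and h :: "real^'n \<Rightarrow> real" and gh :: "real^'n \<Rightarrow> real^'n"
    and ustar :: "real^'m" and pstar :: "real^'n"
    and \<mu>f Lf :: real
    and u uh :: "nat \<Rightarrow> real^'m" and p :: "nat \<Rightarrow> real^'n"
    and \<alpha> \<epsilon> :: "nat \<Rightarrow> real"
  assumes dims: "CARD('n) \<le> CARD('m)"
    and fullrank: "rank B = CARD('n)"
    and f_cvx: "convex_on UNIV f" and h_cvx: "convex_on UNIV h"
    and f_grad: "\<And>x. (f has_derivative (\<lambda>d. gf x \<bullet> d)) (at x)"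
    and h_grad: "\<And>x. (h has_derivative (\<lambda>d. gh x \<bullet> d)) (at x)"
    and gf_cont: "continuous_on UNIV gf" and gh_cont: "continuous_on UNIV gh"
    and gf_lip: "\<exists>L. \<forall>x y. norm (gf x - gf y) \<le> L * norm (x - y)"
    and gh_lip: "\<exists>L. \<forall>x y. norm (gh x - gh y) \<le> L * norm (x - y)"
    and saddle1: "gf ustar + transpose B *v pstar = 0"
    and saddle2: "B *v ustar = gh pstar"
    and IV_spd: "SPD IV" and IQ_spd: "SPD IQ"
    and f_S11: "in_S11 f gf IV \<mu>f Lf"
    and \<mu>f_pos: "0 < \<mu>f" and \<mu>f_Lf: "\<mu>f \<le> Lf" and Lf_lt2: "Lf < 2"
    and half_step: "\<And>k. uh k = u k - matrix_inv IV *v (gf (u k) + transpose B *v p k)"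
    and p_step: "\<And>k. p (Suc k) = p k - \<alpha> k *\<^sub>R (matrix_inv IQ *v (gh (p k) - B *v uh k))"
    and u_step: "\<And>k. normsq (matrix_inv IV)
                   (gf (u (Suc k)) + (1 / \<alpha> k) *\<^sub>R (IV *v (u (Suc k) - u k
                       + \<alpha> k *\<^sub>R (matrix_inv IV *v (transpose B *v p (Suc k)))))) \<le> \<epsilon> k"
  defines "E \<equiv> \<lambda>(v::real^'m) (q::real^'n). 1/2 * normsq IV (v - ustar) + 1/2 * normsq IQ (q - pstar)"
    and "\<mu>V \<equiv> \<mu>f"
    and "\<mu>Q \<equiv> (2 - Lf) * cvx_const (hB h B IV) (ghB gh B IV) IQ"
    and "LSQ2 \<equiv> (smooth_const (hB h B IV) (ghB gh B IV) IQ)\<^sup>2 + (lip_const (eop gf IV) IV)\<^sup>2 * lambda_max (matrix_inv IQ ** B ** matrix_inv IV ** transpose B)"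
  shows "(\<forall>k. 0 < \<alpha> k \<and> \<alpha> k < \<mu>Q / LSQ2 \<longrightarrow>
            (let \<mu>k = min (\<mu>V / 2) (\<mu>Q - \<alpha> k * LSQ2) in
              E (u (Suc k)) (p (Suc k))
                \<le> 1 / (1 + \<alpha> k * \<mu>k) * E (u k) (p k)
                   + 2 * \<alpha> k / ((1 + \<alpha> k * \<mu>k) * \<mu>V) * \<epsilon> k))
       \<and> ((\<forall>k. \<alpha> k = \<mu>Q / (2 * LSQ2)) \<longrightarrow>
            (let \<mu> = min \<mu>V \<mu>Q; \<rho> = 1 / (1 + \<mu>Q * \<mu> / (4 * LSQ2)) in
              0 < \<rho> \<and> \<rho> < 1 \<and>
              (\<forall>N. E (u (Suc N)) (p (Suc N))
                 \<le> \<rho> ^ (Suc N) * E (u 0) (p 0)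
                    + \<mu>Q / (\<mu>V * LSQ2) * (\<Sum>k=0..N. \<rho> ^ (N - k + 1) * \<epsilon> k))))"
proof -
  let ?Vi = "matrix_inv IV" and ?Qi = "matrix_inv IQ" and ?Bt = "transpose B"
  let ?M = "B ** matrix_inv IV ** transpose B"
  have Lfpos: "0 < Lf" using \<mu>f_pos \<mu>f_Lf by linarith
  have hnn: "\<And>x y. 0 \<le> bregman h gh y x" by (rule convex_bregman_nonneg[OF h_cvx h_grad])
  have Msym: "transpose ?M = ?M" by (rule M_sym[OF IV_spd])
  have Mpsd: "\<And>q. 0 \<le> (?M *v q) \<bullet> q" unfolding M_quad by (rule normsq_nonneg[OF spd_inv_spd[OF IV_spd]])
  have hBnn: "\<And>x y. 0 \<le> bregman (hB h B IV) (ghB gh B IV) y x"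
  proof -
    fix x y
    have "0 \<le> normsq ?M (y - x)" unfolding normsq_def[of ?M] by (rule Mpsd)
    then show "0 \<le> bregman (hB h B IV) (ghB gh B IV) y x" unfolding bregman_hB[OF IV_spd] using hnn[of y x] by simp
  qed
  define \<mu>h where "\<mu>h = cvx_const (hB h B IV) (ghB gh B IV) IQ"
  define Lh where "Lh = smooth_const (hB h B IV) (ghB gh B IV) IQ"
  define Le where "Le = lip_const (eop gf IV) IV"
  define lam where "lam = lambda_max (matrix_inv IQ ** B ** matrix_inv IV ** transpose B)"
  have hBlow: "\<And>x y. \<mu>h / 2 * normsq IQ (x - y) \<le> bregman (hB h B IV) (ghB gh B IV) y x"
    unfolding \<mu>h_def by (rule cvx_const_prop(1)[OF IQ_spd hBnn])
  obtain m0 where m0: "m0 > 0" "\<forall>x y. m0 / 2 * normsq IQ (x - y) \<le> bregman (hB h B IV) (ghB gh B IV) y x"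
    using hB_strong[OF IV_spd IQ_spd fullrank hnn] by blast
  have \<mu>hpos: "0 < \<mu>h" using cvx_const_prop(2)[OF IQ_spd hBnn m0(2)] m0(1) unfolding \<mu>h_def by linarith
  have hBup: "\<And>x y. bregman (hB h B IV) (ghB gh B IV) y x \<le> Lh / 2 * normsq IQ (x - y)"
    unfolding Lh_def by (rule smooth_const_prop[OF IQ_spd hBnn hB_smooth[OF IV_spd IQ_spd h_grad gh_lip]])
  have Lh\<mu>h: "\<mu>h \<le> Lh"
  proof -
    obtain z :: "real^'n" where z: "z \<noteq> 0" using exists_nonzero by blast
    have n: "0 < normsq IQ (z - 0)" using normsq_pos[OF IQ_spd z] by simp
    have "\<mu>h / 2 * normsq IQ (z - 0) \<le> Lh / 2 * normsq IQ (z - 0)"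
      using hBlow[where x=z and y=0] hBup[where x=z and y=0] by linarith
    then show ?thesis using n by simp
  qed
  have Lhpos: "0 < Lh" using \<mu>hpos Lh\<mu>h by linarith
  obtain Lx where Lx: "0 \<le> Lx" "\<forall>x y. sqrt (normsq IV (eop gf IV x - eop gf IV y)) \<le> Lx * sqrt (normsq IV (x - y))"
    using e_lip[OF IV_spd f_S11 \<mu>f_pos \<mu>f_Lf] by blast
  have Le0: "0 \<le> Le" and Lelip: "\<And>x y. sqrt (normsq IV (eop gf IV x - eop gf IV y)) \<le> Le * sqrt (normsq IV (x - y))"
    unfolding Le_def using lip_const_prop[OF IV_spd] Lx by blast+
  have lamM: "lam = lambda_max (matrix_inv IQ ** ?M)" by (simp add: lam_def matrix_mul_assoc)
  have lamb: "\<And>q. (?M *v q) \<bullet> q \<le> lam * normsq IQ q"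
    unfolding lamM by (rule lambda_max_char(1)[OF IQ_spd Msym])
  have lam0: "0 \<le> lam" unfolding lamM by (rule lambda_max_char(2)[OF IQ_spd Msym Mpsd])
  have \<mu>Q_eq: "\<mu>Q = (2 - Lf) * \<mu>h" by (simp add: \<mu>Q_def \<mu>h_def)
  have LSQ2_eq: "LSQ2 = Lh\<^sup>2 + Le\<^sup>2 * lam" by (simp add: LSQ2_def Lh_def Le_def lam_def)
  have LSQ2pos: "0 < LSQ2" using Lhpos Le0 lam0 unfolding LSQ2_eq by (simp add: add_pos_nonneg)
  have \<mu>Qpos: "0 < \<mu>Q" using Lf_lt2 \<mu>hpos unfolding \<mu>Q_eq by simp
  have Eeq: "\<And>v q. E v q = 1/2 * normsq IV (v - ustar) + 1/2 * normsq IQ (q - pstar)" by (simp add: E_def)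
  have eps0: "0 \<le> \<epsilon> k" for k using u_step[of k] normsq_nonneg[OF spd_inv_spd[OF IV_spd]] by (meson order_trans)
  have step: "E (u (Suc k)) (p (Suc k)) \<le> 1 / (1 + \<alpha> k * min (\<mu>V / 2) (\<mu>Q - \<alpha> k * LSQ2)) * E (u k) (p k)
                   + 2 * \<alpha> k / ((1 + \<alpha> k * min (\<mu>V / 2) (\<mu>Q - \<alpha> k * LSQ2)) * \<mu>V) * \<epsilon> k"
    if ak: "0 < \<alpha> k" "\<alpha> k < \<mu>Q / LSQ2" for k
  proof -
    have aL: "\<alpha> k * LSQ2 < \<mu>Q" using ak(2) LSQ2pos by (simp add: pos_less_divide_eq)
    define mk where "mk = min (\<mu>V / 2) (\<mu>Q - \<alpha> k * LSQ2)"
    have mkpos: "0 < mk" using aL \<mu>f_pos by (simp add: mk_def \<mu>V_def)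
    have den: "0 < 1 + \<alpha> k * mk" using ak(1) mkpos by (simp add: add_pos_pos)
    have os: "(1 + \<alpha> k * mk) * E (u (Suc k)) (p (Suc k)) \<le> E (u k) (p k) + \<alpha> k / \<mu>V * \<epsilon> k"
      using one_step[OF IV_spd IQ_spd saddle1 saddle2 half_step p_step u_step f_S11 \<mu>f_pos \<mu>f_Lf Lf_lt2
          hnn hBlow hBup Lhpos Le0 Lelip lam0 lamb ak(1)]
      unfolding Eeq mk_def \<mu>Q_eq LSQ2_eq \<mu>V_def by simp
    have "\<alpha> k / \<mu>V * \<epsilon> k \<le> 2 * \<alpha> k / \<mu>V * \<epsilon> k"
      using ak(1) \<mu>f_pos eps0[of k] by (simp add: \<mu>V_def divide_right_mono mult_right_mono)
    with os have "(1 + \<alpha> k * mk) * E (u (Suc k)) (p (Suc k)) \<le> E (u k) (p k) + 2 * \<alpha> k / \<mu>V * \<epsilon> k"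
      by linarith
    then have "E (u (Suc k)) (p (Suc k)) \<le> (E (u k) (p k) + 2 * \<alpha> k / \<mu>V * \<epsilon> k) / (1 + \<alpha> k * mk)"
      using den by (simp add: pos_le_divide_eq mult.commute)
    also have "\<dots> = 1 / (1 + \<alpha> k * mk) * E (u k) (p k) + 2 * \<alpha> k / ((1 + \<alpha> k * mk) * \<mu>V) * \<epsilon> k"
      by (rule div_split) (use den \<mu>f_pos in \<open>simp_all add: \<mu>V_def\<close>)
    finally show ?thesis unfolding mk_def .
  qed
  show ?thesis
  proof (intro conjI allI impI)
    fix k assume "0 < \<alpha> k \<and> \<alpha> k < \<mu>Q / LSQ2"
    then show "let \<mu>k = min (\<mu>V / 2) (\<mu>Q - \<alpha> k * LSQ2) in
              E (u (Suc k)) (p (Suc k))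
                \<le> 1 / (1 + \<alpha> k * \<mu>k) * E (u k) (p k)
                   + 2 * \<alpha> k / ((1 + \<alpha> k * \<mu>k) * \<mu>V) * \<epsilon> k"
      using step by (simp add: Let_def)
  next
    assume aconst: "\<forall>k. \<alpha> k = \<mu>Q / (2 * LSQ2)"
    define \<mu> where "\<mu> = min \<mu>V \<mu>Q"
    define \<rho> where "\<rho> = 1 / (1 + \<mu>Q * \<mu> / (4 * LSQ2))"
    define C where "C = \<mu>Q / (\<mu>V * LSQ2)"
    have \<mu>pos: "0 < \<mu>" using \<mu>Qpos \<mu>f_pos by (simp add: \<mu>_def \<mu>V_def)
    have q: "0 < \<mu>Q * \<mu> / (4 * LSQ2)" using \<mu>Qpos \<mu>pos LSQ2pos by simp
    have \<rho>pos: "0 < \<rho>" and \<rho>lt: "\<rho> < 1" using q by (simp_all add: \<rho>_def)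
    have rec: "E (u (Suc k)) (p (Suc k)) \<le> \<rho> * E (u k) (p k) + C * (\<rho> * \<epsilon> k)" for k
    proof -
      have a: "\<alpha> k = \<mu>Q / (2 * LSQ2)" using aconst by simp
      have ak: "0 < \<alpha> k" "\<alpha> k < \<mu>Q / LSQ2" using \<mu>Qpos LSQ2pos unfolding a by (simp_all add: field_simps)
      have mk: "min (\<mu>V / 2) (\<mu>Q - \<alpha> k * LSQ2) = \<mu> / 2"
        using LSQ2pos unfolding a \<mu>_def by (simp add: field_simps min_def)
      have r: "1 / (1 + \<alpha> k * (\<mu> / 2)) = \<rho>" unfolding \<rho>_def a by (simp add: field_simps)
      have c: "2 * \<alpha> k / ((1 + \<alpha> k * (\<mu> / 2)) * \<mu>V) = C * \<rho>"
        unfolding C_def r[symmetric] unfolding a using \<mu>f_pos LSQ2pos \<mu>Qpos \<mu>pos by (simp add: field_simps \<mu>V_def)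
      show ?thesis using step[OF ak] unfolding mk r c by (simp add: mult.assoc)
    qed
    have main: "E (u (Suc N)) (p (Suc N)) \<le> \<rho> ^ (Suc N) * E (u 0) (p 0) + C * (\<Sum>k=0..N. \<rho> ^ (N - k + 1) * \<epsilon> k)" for N
    proof (induction N)
      case 0 then show ?case using rec[of 0] by simp
    next
      case (Suc N)
      have s: "(\<Sum>k=0..Suc N. \<rho> ^ (Suc N - k + 1) * \<epsilon> k) = \<rho> * (\<Sum>k=0..N. \<rho> ^ (N - k + 1) * \<epsilon> k) + \<rho> * \<epsilon> (Suc N)"
      proof -
        have "(\<Sum>k=0..N. \<rho> ^ (Suc N - k + 1) * \<epsilon> k) = (\<Sum>k=0..N. \<rho> * (\<rho> ^ (N - k + 1) * \<epsilon> k))"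
          by (rule sum.cong) (auto simp: Suc_diff_le)
        then show ?thesis by (simp add: sum_distrib_left)
      qed
      have "E (u (Suc (Suc N))) (p (Suc (Suc N))) \<le> \<rho> * E (u (Suc N)) (p (Suc N)) + C * (\<rho> * \<epsilon> (Suc N))"
        by (rule rec)
      also have "\<dots> \<le> \<rho> * (\<rho> ^ (Suc N) * E (u 0) (p 0) + C * (\<Sum>k=0..N. \<rho> ^ (N - k + 1) * \<epsilon> k)) + C * (\<rho> * \<epsilon> (Suc N))"
        using Suc.IH \<rho>pos by (simp add: mult_left_mono)
      also have "\<dots> = \<rho> ^ (Suc (Suc N)) * E (u 0) (p 0) + C * (\<Sum>k=0..Suc N. \<rho> ^ (Suc N - k + 1) * \<epsilon> k)"
        unfolding s by (simp add: algebra_simps)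
      finally show ?case .
    qed
    show "let \<mu> = min \<mu>V \<mu>Q; \<rho> = 1 / (1 + \<mu>Q * \<mu> / (4 * LSQ2)) in
              0 < \<rho> \<and> \<rho> < 1 \<and>
              (\<forall>N. E (u (Suc N)) (p (Suc N))
                 \<le> \<rho> ^ (Suc N) * E (u 0) (p 0)
                    + \<mu>Q / (\<mu>V * LSQ2) * (\<Sum>k=0..N. \<rho> ^ (N - k + 1) * \<epsilon> k))"
      unfolding Let_def \<mu>_def[symmetric] \<rho>_def[symmetric] C_def[symmetric] using \<rho>pos \<rho>lt main by blast
  qed
qed


end
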